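(* For $r\ge1$, let $\mathbf{v}_r\in\mathrm{GF}(q^m)^r$ have rank $r\le m$, and let $\mathcal{L}_r=\langle\mathbf{v}_r\rangle^\perp$. Then the number $A_{r,r}$ of vectors in $\mathcal{L}_r$ of rank $r$ depends only on $r$ (not on the choice of $\mathbf{v}_r$) and satisfies $A_{r,r}=\alpha(m,r-1)-q^{r-1}A_{r-1,r-1}$, where $A_{0,0}=1$. Furthermore, the rank weight enumerator of $\mathcal{L}_r$ is $$W^{\mathrm{R}}_{\mathcal{L}_r}(x,y)=q^{-m}\Big\{\big[x+(q^m-1)y\big]^{[r]}+(q^m-1)(x-y)^{[r]}\Big\}.$$
   Context: $q$ is a prime power. For $\mathbf{x}\in\mathrm{GF}(q^m)^r$, $\mathrm{rk}(\mathbf{x})$ is the dimension over $\mathrm{GF}(q)$ of the $\mathrm{GF}(q)$-span of its coordinates in $\mathrm{GF}(q^m)$. $\langle\mathbf{v}\rangle=\{a\mathbf{v}:a\in\mathrm{GF}(q^m)\}$, $S^\perp=\{\mathbf{u}:\sum_iu_is_i=0\ \forall\mathbf{s}\in S\}$. $\alpha(m,0)=1$, $\alpha(m,u)=\prod_{i=0}^{u-1}(q^m-q^i)$. The rank weight enumerator of $\mathcal{C}\subseteq\mathrm{GF}(q^m)^r$ is $\sum_{\mathbf{c}\in\mathcal{C}}y^{\mathrm{rk}(\mathbf{c})}x^{r-\mathrm{rk}(\mathbf{c})}$. $q$-product: for homogeneous polynomials $a(x,y;m)=\sum_{i=0}^{d}a_i(m)y^ix^{d-i}$ and $b(x,y;m)=\sum_{j=0}^{e}b_j(m)y^jx^{e-j}$,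 with coefficients real functions of $m$ (zero outside the given ranges), $a*b=\sum_{u=0}^{d+e}c_u(m)y^ux^{d+e-u}$ with $c_u(m)=\sum_{i=0}^uq^{ie}a_i(m)b_{u-i}(m-i)$. $q$-powers: $a^{[0]}=1$, $a^{[l]}=a^{[l-1]}*a$. Here $x+(q^m-1)y$ has coefficients $1,q^m-1$ and $x-y$ has coefficients $1,-1$. *)

theory Defs
  imports "HOL-Algebra.Embedded_Algebras" "HOL-Algebra.FiniteProduct"
begin

text \<open>Vectors in GF(q^m)^r are lists of length r over the carrier of a finite field R;
  GF(q) is a subfield K of R with card K = q.\<close>

definition vecs :: "'a ring \<Rightarrow> nat \<Rightarrow> 'a list set" where
  "vecs R r = {u. length u = r \<and> set u \<subseteq> carrier R}"

definition rk :: "'a ring \<Rightarrow> 'a set \<Rightarrow> 'a list \<Rightarrow> nat" where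
  "rk R K x = (THE n. ring.dimension R n K (ring.Span R K x))"

definition dotp :: "'a ring \<Rightarrow> 'a list \<Rightarrow> 'a list \<Rightarrow> 'a" where
  "dotp R u s = (\<Oplus>\<^bsub>R\<^esub>i\<in>{..<length u}. u ! i \<otimes>\<^bsub>R\<^esub> s ! i)"

definition lineSpan :: "'a ring \<Rightarrow> 'a list \<Rightarrow> 'a list set" where
  "lineSpan R v = {map (\<lambda>x. a \<otimes>\<^bsub>R\<^esub> x) v | a. a \<in> carrier R}"

definition perp :: "'a ring \<Rightarrow> nat \<Rightarrow> 'a list set \<Rightarrow> 'a list set" where
  "perp R r S = {u \<in> vecs R r. \<forall>s\<in>S. dotp R u s = \<zero>\<^bsub>R\<^esub>}"

definition rwe :: "'a ring \<Rightarrow> 'a set \<Rightarrow> nat \<Rightarrow> 'a list set \<Rightarrow> real \<Rightarrow> real \<Rightarrow> real" where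
  "rwe R K r C x y = (\<Sum>c\<in>C. y ^ rk R K c * x ^ (r - rk R K c))"

definition alpha :: "nat \<Rightarrow> nat \<Rightarrow> nat \<Rightarrow> real" where
  "alpha q m u = (\<Prod>i<u. (real q ^ m - real q ^ i))"

fun Aseq :: "nat \<Rightarrow> nat \<Rightarrow> nat \<Rightarrow> real" where
  "Aseq q m 0 = 1"
| "Aseq q m (Suc r) = alpha q m r - real q ^ r * Aseq q m r"

text \<open>Homogeneous polynomial: (degree d, coefficient a u m of y^u x^(d-u)),
  coefficients are real functions of the (integer) parameter m, zero for u > d.\<close>
type_synonym hpoly = "nat \<times> (nat \<Rightarrow> int \<Rightarrow> real)"

fun qprod :: "nat \<Rightarrow> hpoly \<Rightarrow> hpoly \<Rightarrow> hpoly" where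
  "qprod q (d, a) (e, b) =
     (d + e, \<lambda>u m. if u \<le> d + e
                   then (\<Sum>i=0..u. real q ^ (i * e) * a i m * b (u - i) (m - int i))
                   else 0)"

fun qpow :: "nat \<Rightarrow> hpoly \<Rightarrow> nat \<Rightarrow> hpoly" where
  "qpow q a 0 = (0, \<lambda>u m. if u = 0 then 1 else 0)"
| "qpow q a (Suc l) = qprod q (qpow q a l) a"

text \<open>x + (q^m - 1) y\<close>
definition lin1 :: "nat \<Rightarrow> hpoly" where
  "lin1 q = (1, \<lambda>u m. if u = 0 then 1 else if u = 1 then real q powi m - 1 else 0)"

text \<open>x - y\<close>
definition lin2 :: hpoly where
  "lin2 = (1, \<lambda>u m. if u = 0 then 1 else if u = 1 then -1 else 0)"

fun heval :: "hpoly \<Rightarrow> int \<Rightarrow> real \<Rightarrow> real \<Rightarrow> real" where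
  "heval (d, a) m x y = (\<Sum>u\<le>d. a u m * y ^ u * x ^ (d - u))"

end

theory Submission
  imports Defs
begin


lemma fst_qpow: "fst (qpow q a n) = n * fst a"
proof (induct n)
  case 0 thus ?case by simp
next
  case (Suc n)
  obtain d b where a: "a = (d, b)" by (cases a)
  obtain e c where p: "qpow q a n = (e, c)" by (cases "qpow q a n")
  show ?case using Suc p a by simp
qed

lemma snd_qpow_Suc: "snd (qpow q a (Suc n)) u M =
  (if u \<le> n * fst a + fst a then (\<Sum>i=0..u. real q ^ (i * fst a) * snd (qpow q a n) i M * snd a (u - i) (M - int i)) else 0)"
proof -
  obtain d b where a: "a = (d, b)" by (cases a)
  obtain e c where p: "qpow q a n = (e, c)" by (cases "qpow q a n")
  have "e = n * d" using fst_qpow[of q a n] p a by simp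
  thus ?thesis using p a by simp
qed

lemma snd_qpow_gt: assumes "u > n * fst a" shows "snd (qpow q a n) u M = 0"
proof (cases n)
  case 0 thus ?thesis using assms by simp
next
  case (Suc k) thus ?thesis using assms by (subst Suc, subst snd_qpow_Suc) simp
qed

lemma sum_two:
  fixes F :: "nat \<Rightarrow> nat \<Rightarrow> real" and u :: nat
  assumes "\<And>i j. j \<ge> 2 \<Longrightarrow> F i j = (0::real)"
  shows "(\<Sum>i=0..u. F i (u - i)) = F u 0 + (if u = 0 then 0 else F (u - 1) 1)"
proof (cases u)
  case 0 thus ?thesis by simp
next
  case (Suc w)
  have "(\<Sum>i=0..Suc w. F i (Suc w - i)) = (\<Sum>i=0..w. F i (Suc w - i)) + F (Suc w) 0"
    by (simp add: sum.atLeast0_atMost_Suc)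
  also have "(\<Sum>i=0..w. F i (Suc w - i)) = F w 1"
  proof (cases w)
    case 0 thus ?thesis by simp
  next
    case (Suc w')
    have "(\<Sum>i=0..w. F i (Suc w - i)) = (\<Sum>i=0..w'. F i (Suc w - i)) + F w 1"
      using Suc by (simp add: sum.atLeast0_atMost_Suc)
    also have "(\<Sum>i=0..w'. F i (Suc w - i)) = 0"
      by (rule sum.neutral) (use Suc assms in auto)
    finally show ?thesis by simp
  qed
  finally show ?thesis using Suc by simp
qed

definition Pc :: "nat \<Rightarrow> nat \<Rightarrow> nat \<Rightarrow> nat \<Rightarrow> real" where
  "Pc q m n k = snd (qpow q (lin1 q) n) k (int m)"
definition Sc :: "nat \<Rightarrow> nat \<Rightarrow> nat \<Rightarrow> nat \<Rightarrow> real" where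
  "Sc q m n k = snd (qpow q lin2 n) k (int m)"

lemma Pc_0: "Pc q m 0 k = (if k = 0 then 1 else 0)" by (simp add: Pc_def)
lemma Sc_0: "Sc q m 0 k = (if k = 0 then 1 else 0)" by (simp add: Sc_def)
lemma Pc_gt: "k > n \<Longrightarrow> Pc q m n k = 0" unfolding Pc_def by (rule snd_qpow_gt) (simp add: lin1_def)
lemma Sc_gt: "k > n \<Longrightarrow> Sc q m n k = 0" unfolding Sc_def by (rule snd_qpow_gt) (simp add: lin2_def)

lemma Pc_Suc: assumes q: "q > 0"
  shows "Pc q m (Suc n) k = real q ^ k * Pc q m n k
     + (if k = 0 then 0 else (real q ^ m - real q ^ (k - 1)) * Pc q m n (k - 1))"
proof (cases "k \<le> Suc n")
  case True
  define F where "F i j = real q ^ i * Pc q m n i * snd (lin1 q) j (int m - int i)" for i j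
  have "Pc q m (Suc n) k = (\<Sum>i=0..k. F i (k - i))"
    unfolding Pc_def F_def using True by (subst snd_qpow_Suc) (simp add: lin1_def)
  also have "\<dots> = F k 0 + (if k = 0 then 0 else F (k - 1) 1)"
    by (rule sum_two) (simp add: F_def lin1_def)
  also have "\<dots> = real q ^ k * Pc q m n k
     + (if k = 0 then 0 else (real q ^ m - real q ^ (k - 1)) * Pc q m n (k - 1))"
  proof (cases k)
    case 0 thus ?thesis by (simp add: F_def lin1_def)
  next
    case (Suc j)
    have "real q ^ j * (real q powi (int m - int j) - 1) = real q ^ m - real q ^ j"
      using q by (simp add: power_int_diff right_diff_distrib)
    thus ?thesis using Suc by (simp add: F_def lin1_def algebra_simps)
  qed
  finally show ?thesis .
next
  case False
  thus ?thesis by (simp add: Pc_gt)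
qed

lemma Sc_Suc:
  shows "Sc q m (Suc n) k = real q ^ k * Sc q m n k
     - (if k = 0 then 0 else real q ^ (k - 1) * Sc q m n (k - 1))"
proof (cases "k \<le> Suc n")
  case True
  define F where "F i j = real q ^ i * Sc q m n i * snd lin2 j (int m - int i)" for i j
  have "Sc q m (Suc n) k = (\<Sum>i=0..k. F i (k - i))"
    unfolding Sc_def F_def using True by (subst snd_qpow_Suc) (simp add: lin2_def)
  also have "\<dots> = F k 0 + (if k = 0 then 0 else F (k - 1) 1)"
    by (rule sum_two) (simp add: F_def lin2_def)
  also have "\<dots> = real q ^ k * Sc q m n k
     - (if k = 0 then 0 else real q ^ (k - 1) * Sc q m n (k - 1))"
    by (cases k) (simp_all add: F_def lin2_def)
  finally show ?thesis .
next
  case False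
  thus ?thesis by (simp add: Sc_gt)
qed

lemma Pc_diag: "q > 0 \<Longrightarrow> Pc q m n n = alpha q m n"
proof (induct n)
  case 0 thus ?case by (simp add: Pc_0 alpha_def)
next
  case (Suc n)
  thus ?case by (simp add: Pc_Suc Pc_gt alpha_def)
qed

definition Ah :: "nat \<Rightarrow> nat \<Rightarrow> nat \<Rightarrow> nat \<Rightarrow> real" where
  "Ah q m n k = (Pc q m n k + (real q ^ m - 1) * Sc q m n k) / real q ^ m"

lemma Ah_0: "q > 0 \<Longrightarrow> Ah q m 0 k = (if k = 0 then 1 else 0)"
  by (simp add: Ah_def Pc_0 Sc_0)

lemma Ah_gt: "k > n \<Longrightarrow> Ah q m n k = 0"
  by (simp add: Ah_def Pc_gt Sc_gt)

lemma Ah_Suc: assumes "q > 0"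
  shows "Ah q m (Suc n) k = real q ^ k * Ah q m n k
     + (if k = 0 then 0 else Pc q m n (k - 1) - real q ^ (k - 1) * Ah q m n (k - 1))"
  using assms by (cases k) (simp_all add: Ah_def Pc_Suc Sc_Suc field_simps)

lemma Ah_diag: assumes "q > 0" shows "Ah q m n n = Aseq q m n"
proof (induct n)
  case 0 thus ?case using assms by (simp add: Ah_0)
next
  case (Suc n)
  thus ?case using assms by (simp add: Ah_Suc Ah_gt Pc_diag)
qed


locale rsetup = field R for R :: "'a ring" (structure) +
  fixes K assumes K: "subfield K R" and fin: "finite (carrier R)"
begin

declare Span.simps[simp del]

lemma Span_Nil: "Span K [] = {\<zero>}" by (simp add: Span.simps)
lemma Span_Cons: "Span K (x # u) = line_extension K x (Span K u)" by (simp add: Span.simps)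

lemma Kc: "K \<subseteq> carrier R" using subfieldE(3)[OF K] .

lemma rk_dim: assumes "set u \<subseteq> carrier R" shows "dimension (rk R K u) K (Span K u)"
proof -
  obtain Vs where "set Vs \<subseteq> carrier R" "independent K Vs" "Span K Vs = Span K u"
    using filter_base[OF K assms] by blast
  hence d: "dimension (length Vs) K (Span K u)" using dimension_independent by metis
  have "rk R K u = length Vs" unfolding rk_def
    using d dimension_is_inj[OF K] by blast
  thus ?thesis using d by simp
qed

lemma rk_eqI: assumes "dimension n K (Span K u)" shows "rk R K u = n"
  unfolding rk_def using assms dimension_is_inj[OF K] by blast

lemma rk_Nil: "rk R K [] = 0"
  by (rule rk_eqI) (simp add: Span_Nil)

lemma rk_Cons: assumes "x \<in> carrier R" "set u \<subseteq> carrier R"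
  shows "rk R K (x # u) = (if x \<in> Span K u then rk R K u else Suc (rk R K u))"
proof (cases "x \<in> Span K u")
  case True
  have "Span K (x # u) = Span K u"
  proof
    show "Span K (x # u) \<subseteq> Span K u"
      using mono_Span_subset[OF K, of "x # u" u] Span_base_incl[OF K assms(2)] True assms by simp
    show "Span K u \<subseteq> Span K (x # u)" by (rule mono_Span[OF K assms(2,1)])
  qed
  hence "rk R K (x # u) = rk R K u" unfolding rk_def by simp
  thus ?thesis using True by (simp only: if_P[OF True] if_True)
next
  case False
  have "dimension (Suc (rk R K u)) K (Span K (x # u))"
    unfolding Span_Cons by (rule Suc_dim[OF assms(1) False rk_dim[OF assms(2)]])
  hence "rk R K (x # u) = Suc (rk R K u)" by (rule rk_eqI)
  thus ?thesis by (simp only: if_not_P[OF False] if_False)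
qed

lemma rk_Cons_in: "x \<in> carrier R \<Longrightarrow> set u \<subseteq> carrier R \<Longrightarrow> x \<in> Span K u \<Longrightarrow> rk R K (x # u) = rk R K u"
  using rk_Cons[of x u] by (simp only: if_True)
lemma rk_Cons_notin: "x \<in> carrier R \<Longrightarrow> set u \<subseteq> carrier R \<Longrightarrow> x \<notin> Span K u \<Longrightarrow> rk R K (x # u) = Suc (rk R K u)"
  using rk_Cons[of x u] by (simp only: if_False)

lemma rk_le: "set u \<subseteq> carrier R \<Longrightarrow> rk R K u \<le> length u"
proof (induct u)
  case Nil thus ?case by (simp add: rk_Nil)
next
  case (Cons x u)
  hence h: "x \<in> carrier R" "set u \<subseteq> carrier R" "rk R K u \<le> length u" by auto
  show ?case
  proof (cases "x \<in> Span K u")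
    case True thus ?thesis using rk_Cons_in[OF h(1,2) True] h(3) unfolding length_Cons by linarith
  next
    case False thus ?thesis using rk_Cons_notin[OF h(1,2) False] h(3) unfolding length_Cons by linarith
  qed
qed

lemma indep_iff_rk: "set u \<subseteq> carrier R \<Longrightarrow> independent K u \<longleftrightarrow> rk R K u = length u"
proof (induct u)
  case Nil thus ?case by (simp add: rk_Nil)
next
  case (Cons x u)
  have "independent K (x # u) \<longleftrightarrow> x \<notin> Span K u \<and> independent K u"
  proof
    assume "independent K (x # u)"
    thus "x \<notin> Span K u \<and> independent K u" using independent_backwards(1,2) by blast
  next
    assume "x \<notin> Span K u \<and> independent K u"
    moreover have "x \<in> carrier R" using Cons.prems by simp
    ultimately show "independent K (x # u)" using li_Cons by blast
  qed
  moreover have h: "x \<in> carrier R" "set u \<subseteq> carrier R" using Cons.prems by auto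
  moreover note IH = Cons.hyps[OF h(2)]
  ultimately show ?case
  proof (cases "x \<in> Span K u")
    case True
    have "\<not> independent K (x # u)" using True \<open>independent K (x # u) \<longleftrightarrow> _\<close> by blast
    moreover have "rk R K (x # u) \<noteq> length (x # u)" using rk_Cons_in[OF h(1,2) True] rk_le[OF h(2)]
      unfolding length_Cons by linarith
    ultimately show ?thesis by blast
  next
    case False
    have "independent K (x # u) \<longleftrightarrow> independent K u" using False \<open>independent K (x # u) \<longleftrightarrow> _\<close> by blast
    moreover have "rk R K (x # u) = length (x # u) \<longleftrightarrow> rk R K u = length u" using rk_Cons_notin[OF h(1,2) False]
      unfolding length_Cons by linarith
    ultimately show ?thesis using IH by blast
  qed
qed


abbreviation "KL n \<equiv> {c. set c \<subseteq> K \<and> length c = n}"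

lemma finK: "finite K" using Kc fin finite_subset by blast

lemma card_KL: "card (KL n) = card K ^ n" using card_lists_length_eq[OF finK] .
lemma fin_KL: "finite (KL n)" using finite_lists_length_eq[OF finK] .

lemma combine_in_Span: "set u \<subseteq> carrier R \<Longrightarrow> set c \<subseteq> K \<Longrightarrow> combine c u \<in> Span K u"
  using Span_eq_combine_set[OF K] by blast

lemma KL_Suc: "{c. set c \<subseteq> K \<and> length c = Suc n \<and> P c} = (\<Union>k\<in>K. (Cons k) ` {c. set c \<subseteq> K \<and> length c = n \<and> P (k # c)})"
  (is "?A = ?B")
proof
  show "?A \<subseteq> ?B"
  proof
    fix c assume "c \<in> ?A"
    then obtain k c' where "c = k # c'" "k \<in> K" "set c' \<subseteq> K" "length c' = n" "P (k # c')"
      by (cases c) auto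
    thus "c \<in> ?B" by blast
  qed
qed auto

lemma card_UN_Cons: assumes "finite A" "\<And>k. k \<in> A \<Longrightarrow> finite (B k)"
  shows "card (\<Union>k\<in>A. (Cons k) ` B k) = (\<Sum>k\<in>A. card (B k))"
proof -
  have "card (\<Union>k\<in>A. (Cons k) ` B k) = (\<Sum>k\<in>A. card ((Cons k) ` B k))"
    by (rule card_UN_disjoint) (use assms in auto)
  also have "\<dots> = (\<Sum>k\<in>A. card (B k))"
    by (rule sum.cong) (auto intro: card_image inj_onI)
  finally show ?thesis .
qed

lemma count_combine:
  assumes "set u \<subseteq> carrier R" "w \<in> Span K u"
  shows "card {c. set c \<subseteq> K \<and> length c = length u \<and> combine c u = w} = card K ^ (length u - rk R K u)"
  using assms
proof (induct u arbitrary: w)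
  case Nil
  hence "w = \<zero>" by (simp add: Span_Nil)
  hence "{c. set c \<subseteq> K \<and> length c = length [] \<and> combine c [] = w} = {[]}" by auto
  thus ?case by (simp add: rk_Nil)
next
  case (Cons x u)
  have x: "x \<in> carrier R" and u: "set u \<subseteq> carrier R" using Cons.prems by auto
  define S where "S w' = {c. set c \<subseteq> K \<and> length c = length u \<and> combine c u = w'}" for w'
  have w: "w \<in> carrier R" using Cons.prems(2) Span_subgroup_props(1)[OF K Cons.prems(1)] by blast
  have eq: "{c. set c \<subseteq> K \<and> length c = length (x # u) \<and> combine c (x # u) = w}
      = (\<Union>k\<in>K. (Cons k) ` S (w \<ominus> k \<otimes> x))"
  proof -
    have "{c. set c \<subseteq> K \<and> length c = length (x # u) \<and> combine c (x # u) = w}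
      = (\<Union>k\<in>K. (Cons k) ` {c. set c \<subseteq> K \<and> length c = length u \<and> combine (k # c) (x # u) = w})"
      using KL_Suc[of "length u" "\<lambda>c. combine c (x # u) = w"] by simp
    also have "\<dots> = (\<Union>k\<in>K. (Cons k) ` S (w \<ominus> k \<otimes> x))"
    proof (rule SUP_cong[OF refl], rule arg_cong[where f="image _"])
      fix k assume k: "k \<in> K"
      hence kc: "k \<in> carrier R" using Kc by blast
      show "{c. set c \<subseteq> K \<and> length c = length u \<and> combine (k # c) (x # u) = w} = S (w \<ominus> k \<otimes> x)"
        unfolding S_def
      proof (intro Collect_cong conj_cong refl)
        fix c assume "set c \<subseteq> K"
        hence cc: "combine c u \<in> carrier R" using Kc u by (intro combine_in_carrier) auto
        show "(combine (k # c) (x # u) = w) = (combine c u = w \<ominus> k \<otimes> x)"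
        proof
          assume "combine (k # c) (x # u) = w"
          hence "w = k \<otimes> x \<oplus> combine c u" by simp
          thus "combine c u = w \<ominus> k \<otimes> x" using cc kc x by (simp) algebra
        next
          assume "combine c u = w \<ominus> k \<otimes> x"
          thus "combine (k # c) (x # u) = w" using w kc x by simp algebra
        qed
      qed
    qed
    finally show ?thesis .
  qed
  have finS: "finite (S w')" for w'
    unfolding S_def by (rule finite_subset[OF _ fin_KL[of "length u"]]) auto
  have cardeq: "card {c. set c \<subseteq> K \<and> length c = length (x # u) \<and> combine c (x # u) = w}
      = (\<Sum>k\<in>K. card (S (w \<ominus> k \<otimes> x)))"
    unfolding eq by (rule card_UN_Cons[OF finK finS])
  have rkle: "rk R K u \<le> length u" by (rule rk_le[OF u])
  show ?case
  proof (cases "x \<in> Span K u")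
    case True
    have "Span K (x # u) = Span K u"
    proof
      show "Span K (x # u) \<subseteq> Span K u"
        using mono_Span_subset[OF K, of "x # u" u] Span_base_incl[OF K u] True x u by simp
      show "Span K u \<subseteq> Span K (x # u)" by (rule mono_Span[OF K u x])
    qed
    hence wS: "w \<in> Span K u" using Cons.prems(2) by simp
    have "card (S (w \<ominus> k \<otimes> x)) = card K ^ (length u - rk R K u)" if k: "k \<in> K" for k
    proof -
      have "k \<otimes> x \<in> Span K u" using Span_smult_closed[OF K u k True] .
      hence "w \<ominus> k \<otimes> x \<in> Span K u" unfolding minus_eq
        using Span_subgroup_props(3,4)[OF K u] wS by blast
      thus ?thesis unfolding S_def by (rule Cons.hyps[OF u])
    qed
    hence "(\<Sum>k\<in>K. card (S (w \<ominus> k \<otimes> x))) = card K * card K ^ (length u - rk R K u)" by simp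
    also have "\<dots> = card K ^ (length (x # u) - rk R K (x # u))"
      using rk_Cons_in[OF x u True] rkle by (simp add: Suc_diff_le)
    finally show ?thesis using cardeq by simp
  next
    case False
    have "w \<in> line_extension K x (Span K u)" using Cons.prems(2) unfolding Span_Cons .
    then obtain k0 s where k0: "k0 \<in> K" and s: "s \<in> Span K u" and ws: "w = k0 \<otimes> x \<oplus> s"
      unfolding line_extension_mem_iff by blast
    have sc: "s \<in> carrier R" using s Span_subgroup_props(1)[OF K u] by blast
    have k0c: "k0 \<in> carrier R" using k0 Kc by blast
    have zero: "card (S (w \<ominus> k \<otimes> x)) = 0" if k: "k \<in> K" "k \<noteq> k0" for k
    proof -
      have kc: "k \<in> carrier R" using k Kc by blast
      have "w \<ominus> k \<otimes> x \<notin> Span K u"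
      proof
        assume a: "w \<ominus> k \<otimes> x \<in> Span K u"
        have "(k0 \<ominus> k) \<otimes> x = (w \<ominus> k \<otimes> x) \<oplus> (\<ominus> s)"
          unfolding ws using k0c kc sc x by algebra
        also have "\<dots> \<in> Span K u" by (rule Span_subgroup_props(3)[OF K u a Span_subgroup_props(4)[OF K u s]])
        finally have "(k0 \<ominus> k) \<otimes> x \<in> Span K u" .
        moreover have "k0 \<ominus> k \<in> K - {\<zero>}"
        proof
          show "k0 \<ominus> k \<in> K" unfolding minus_eq by (rule subring_props(7)[OF K k0 subring_props(5)[OF K k(1)]])
          show "k0 \<ominus> k \<notin> {\<zero>}"
          proof
            assume "k0 \<ominus> k \<in> {\<zero>}"
            hence z: "k0 \<ominus> k = \<zero>" by blast
            have "k0 = (k0 \<ominus> k) \<oplus> k" using k0c kc by algebra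
            also have "\<dots> = k" unfolding z using kc by (rule l_zero)
            finally show False using k(2) by blast
          qed
        qed
        ultimately have "x \<in> Span K u" by (intro Span_m_inv_simprule[OF K u _ x])
        thus False using False by blast
      qed
      hence "S (w \<ominus> k \<otimes> x) = {}" unfolding S_def
      proof (intro equals0I)
        fix c assume "w \<ominus> k \<otimes> x \<notin> Span K u" and "c \<in> {c. set c \<subseteq> K \<and> length c = length u \<and> combine c u = w \<ominus> k \<otimes> x}"
        hence "set c \<subseteq> K" "combine c u = w \<ominus> k \<otimes> x" "w \<ominus> k \<otimes> x \<notin> Span K u" by auto
        thus False using combine_in_Span[OF u, of c] by simp
      qed
      thus ?thesis by simp
    qed
    have "w \<ominus> k0 \<otimes> x = s" unfolding ws using k0c sc x by algebra
    hence one: "card (S (w \<ominus> k0 \<otimes> x)) = card K ^ (length u - rk R K u)"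
      unfolding S_def using Cons.hyps[OF u s] by (simp only:)
    have "(\<Sum>k\<in>K. card (S (w \<ominus> k \<otimes> x))) = card (S (w \<ominus> k0 \<otimes> x)) + (\<Sum>k\<in>K - {k0}. card (S (w \<ominus> k \<otimes> x)))"
      by (rule sum.remove[OF finK k0])
    also have "(\<Sum>k\<in>K - {k0}. card (S (w \<ominus> k \<otimes> x))) = 0"
      by (rule sum.neutral) (use zero in blast)
    also have "length (x # u) - rk R K (x # u) = length u - rk R K u"
      unfolding rk_Cons_notin[OF x u False] by simp
    ultimately show ?thesis using cardeq one by (simp only: add_0_right)
  qed
qed


lemma card_Span: assumes u: "set u \<subseteq> carrier R" shows "card (Span K u) = card K ^ rk R K u"
proof -
  let ?n = "length u"
  have finSp: "finite (Span K u)" using Span_subgroup_props(1)[OF K u] fin finite_subset by blast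
  have eq: "KL ?n = (\<Union>w\<in>Span K u. {c. set c \<subseteq> K \<and> length c = ?n \<and> combine c u = w})"
  proof
    show "KL ?n \<subseteq> (\<Union>w\<in>Span K u. {c. set c \<subseteq> K \<and> length c = ?n \<and> combine c u = w})"
    proof
      fix c assume "c \<in> KL ?n"
      hence "set c \<subseteq> K" "length c = ?n" by auto
      moreover have "combine c u \<in> Span K u" by (rule combine_in_Span[OF u \<open>set c \<subseteq> K\<close>])
      ultimately show "c \<in> (\<Union>w\<in>Span K u. {c. set c \<subseteq> K \<and> length c = ?n \<and> combine c u = w})" by blast
    qed
  qed blast
  have "card (KL ?n) = (\<Sum>w\<in>Span K u. card {c. set c \<subseteq> K \<and> length c = ?n \<and> combine c u = w})"
    unfolding eq
    by (rule card_UN_disjoint[OF finSp]) (auto intro: finite_subset[OF _ fin_KL[of ?n]])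
  also have "\<dots> = (\<Sum>w\<in>Span K u. card K ^ (?n - rk R K u))"
    by (rule sum.cong[OF refl]) (rule count_combine[OF u])
  finally have "card K ^ ?n = card (Span K u) * card K ^ (?n - rk R K u)" by (simp add: card_KL)
  moreover have "card K ^ ?n = card K ^ rk R K u * card K ^ (?n - rk R K u)"
    using rk_le[OF u] by (simp flip: power_add)
  moreover have "card K > 0" using finK subring_props(4)[OF K] by (simp add: card_gt_0_iff)
  ultimately show ?thesis by simp
qed

lemma fin_vecs: "finite (vecs R n)"
  unfolding vecs_def using finite_lists_length_eq[OF fin] by (simp add: conj_commute)

lemma vecs_Suc: "{l \<in> vecs R (Suc n). P l} = (\<Union>u\<in>vecs R n. (\<lambda>x. x # u) ` {x \<in> carrier R. P (x # u)})"
  (is "?A = ?B")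
proof
  show "?A \<subseteq> ?B"
  proof
    fix l assume "l \<in> ?A"
    then obtain x u where "l = x # u" "x \<in> carrier R" "u \<in> vecs R n" "P (x # u)"
      unfolding vecs_def by (cases l) auto
    thus "l \<in> ?B" by blast
  qed
qed (auto simp: vecs_def)

lemma card_vecs_Suc: "card {l \<in> vecs R (Suc n). P l} = (\<Sum>u\<in>vecs R n. card {x \<in> carrier R. P (x # u)})"
proof -
  have "card {l \<in> vecs R (Suc n). P l} = (\<Sum>u\<in>vecs R n. card ((\<lambda>x. x # u) ` {x \<in> carrier R. P (x # u)}))"
    unfolding vecs_Suc by (rule card_UN_disjoint[OF fin_vecs]) (auto intro: finite_subset[OF _ fin])
  also have "\<dots> = (\<Sum>u\<in>vecs R n. card {x \<in> carrier R. P (x # u)})"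
    by (rule sum.cong[OF refl]) (auto intro: card_image inj_onI)
  finally show ?thesis .
qed

lemma sum_if_card: "finite A \<Longrightarrow> (\<Sum>u\<in>A. if P u then (c::real) else 0) = c * real (card {u \<in> A. P u})"
  by (simp add: sum.inter_filter[symmetric])

end

locale rsetup2 = rsetup +
  fixes m :: nat assumes cardR: "card (carrier R) = card K ^ m"
begin

lemma q_pos: "card K > 0" using finK subring_props(4)[OF K] by (simp add: card_gt_0_iff)

lemma count_rank: "real (card {u \<in> vecs R n. rk R K u = k}) = Pc (card K) m n k"
proof (induct n arbitrary: k)
  case 0
  have "vecs R 0 = {[]}" unfolding vecs_def by auto
  hence "{u \<in> vecs R 0. rk R K u = k} = (if k = 0 then {[]} else {})" using rk_Nil by auto
  thus ?case by (simp add: Pc_0)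
next
  case (Suc n)
  note IH = Suc
  let ?q = "card K"
  have one: "card {x \<in> carrier R. rk R K (x # u) = k} =
      (if rk R K u = k then ?q ^ k else 0) + (if Suc (rk R K u) = k then ?q ^ m - ?q ^ (k - 1) else 0)"
    if u: "u \<in> vecs R n" for u
  proof -
    have uc: "set u \<subseteq> carrier R" using u unfolding vecs_def by simp
    have sub: "Span K u \<subseteq> carrier R" by (rule Span_subgroup_props(1)[OF K uc])
    have cS: "card (Span K u) = ?q ^ rk R K u" by (rule card_Span[OF uc])
    have rkx: "rk R K (x # u) = (if x \<in> Span K u then rk R K u else Suc (rk R K u))" if "x \<in> carrier R" for x
      by (rule rk_Cons[OF that uc])
    show ?thesis
    proof (cases "rk R K u = k")
      case True
      have "{x \<in> carrier R. rk R K (x # u) = k} = Span K u"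
      proof (intro equalityI subsetI)
        fix x assume "x \<in> {x \<in> carrier R. rk R K (x # u) = k}"
        hence x: "x \<in> carrier R" "rk R K (x # u) = k" by auto
        show "x \<in> Span K u"
        proof (rule ccontr)
          assume "x \<notin> Span K u"
          from rk_Cons_notin[OF x(1) uc this] x(2) True show False by simp
        qed
      next
        fix x assume x: "x \<in> Span K u"
        have xc: "x \<in> carrier R" using x sub by blast
        show "x \<in> {x \<in> carrier R. rk R K (x # u) = k}" using rk_Cons_in[OF xc uc x] True xc by simp
      qed
      thus ?thesis using True cS by simp
    next
      case False
      show ?thesis
      proof (cases "Suc (rk R K u) = k")
        case True
        have "{x \<in> carrier R. rk R K (x # u) = k} = carrier R - Span K u"
        proof (intro equalityI subsetI)
          fix x assume "x \<in> {x \<in> carrier R. rk R K (x # u) = k}"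
          hence x: "x \<in> carrier R" "rk R K (x # u) = k" by auto
          have "x \<notin> Span K u"
          proof
            assume "x \<in> Span K u"
            from rk_Cons_in[OF x(1) uc this] x(2) False show False by simp
          qed
          thus "x \<in> carrier R - Span K u" using x by blast
        next
          fix x assume x: "x \<in> carrier R - Span K u"
          hence "x \<in> carrier R" "x \<notin> Span K u" by auto
          from rk_Cons_notin[OF this(1) uc this(2)] this(1) True
          show "x \<in> {x \<in> carrier R. rk R K (x # u) = k}" by simp
        qed
        hence "card {x \<in> carrier R. rk R K (x # u) = k} = card (carrier R) - card (Span K u)"
          using card_Diff_subset[OF finite_subset[OF sub fin] sub] by simp
        moreover have "k - 1 = rk R K u" using True by simp
        ultimately show ?thesis using True False cS cardR by simp
      next
        case False2: False
        have "{x \<in> carrier R. rk R K (x # u) = k} = {}"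
        proof (intro equals0I)
          fix x assume "x \<in> {x \<in> carrier R. rk R K (x # u) = k}"
          hence x: "x \<in> carrier R" "rk R K (x # u) = k" by auto
          show False
          proof (cases "x \<in> Span K u")
            case True from rk_Cons_in[OF x(1) uc True] x(2) False show False by simp
          next
            case F: False from rk_Cons_notin[OF x(1) uc F] x(2) False2 show False by simp
          qed
        qed
        hence "card {x \<in> carrier R. rk R K (x # u) = k} = 0" by (simp only: card.empty)
        thus ?thesis using False False2 by simp
      qed
    qed
  qed
  have le: "?q ^ (k - 1) \<le> ?q ^ m" if ne: "{u \<in> vecs R n. Suc (rk R K u) = k} \<noteq> {}"
  proof -
    obtain u where u: "u \<in> vecs R n" "Suc (rk R K u) = k" using ne by blast
    have uc: "set u \<subseteq> carrier R" using u unfolding vecs_def by simp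
    have "card (Span K u) \<le> card (carrier R)"
      by (rule card_mono[OF fin Span_subgroup_props(1)[OF K uc]])
    moreover have "k - 1 = rk R K u" using u by simp
    ultimately show ?thesis using card_Span[OF uc] u cardR by simp
  qed
  have "real (card {l \<in> vecs R (Suc n). rk R K l = k}) =
      (\<Sum>u\<in>vecs R n. real (card {x \<in> carrier R. rk R K (x # u) = k}))"
    by (simp add: card_vecs_Suc)
  also have "\<dots> = (\<Sum>u\<in>vecs R n. (if rk R K u = k then real ?q ^ k else 0)
       + (if Suc (rk R K u) = k then real ?q ^ m - real ?q ^ (k - 1) else 0))"
  proof (rule sum.cong[OF refl])
    fix u assume u: "u \<in> vecs R n"
    show "real (card {x \<in> carrier R. rk R K (x # u) = k}) = (if rk R K u = k then real ?q ^ k else 0)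
       + (if Suc (rk R K u) = k then real ?q ^ m - real ?q ^ (k - 1) else 0)"
    proof (cases "Suc (rk R K u) = k")
      case True
      hence "?q ^ (k - 1) \<le> ?q ^ m" using le u by blast
      thus ?thesis using one[OF u] True by (simp add: of_nat_diff)
    next
      case False thus ?thesis using one[OF u] by simp
    qed
  qed
  also have "\<dots> = real ?q ^ k * card {u \<in> vecs R n. rk R K u = k}
      + (real ?q ^ m - real ?q ^ (k - 1)) * card {u \<in> vecs R n. Suc (rk R K u) = k}"
    by (simp add: sum.distrib sum_if_card[OF fin_vecs])
  also have "\<dots> = Pc ?q m (Suc n) k"
  proof (cases k)
    case 0 thus ?thesis using IH[of 0] q_pos by (simp add: Pc_Suc)
  next
    case (Suc j)
    have "{u \<in> vecs R n. Suc (rk R K u) = k} = {u \<in> vecs R n. rk R K u = j}" using Suc by auto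
    thus ?thesis using Suc IH[of j] IH[of k] q_pos by (simp add: Pc_Suc)
  qed
  finally show ?case .
qed


lemma combine_map2:
  assumes "length u = length c" "length c = length v'" "set u \<subseteq> carrier R" "set c \<subseteq> carrier R"
    "set v' \<subseteq> carrier R" "v0 \<in> carrier R"
  shows "combine u (map2 (\<lambda>a b. a \<otimes> v0 \<oplus> b) c v') = combine c u \<otimes> v0 \<oplus> combine u v'"
  using assms
proof (induct u arbitrary: c v')
  case Nil thus ?case using assms(6) by simp
next
  case (Cons x u)
  obtain a c' where c: "c = a # c'" using Cons.prems(1) by (cases c) auto
  obtain b v'' where v: "v' = b # v''" using Cons.prems(1,2) c by (cases v') auto
  have x: "x \<in> carrier R" and u: "set u \<subseteq> carrier R" and a: "a \<in> carrier R" and c': "set c' \<subseteq> carrier R"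
    and b: "b \<in> carrier R" and v'': "set v'' \<subseteq> carrier R" using Cons.prems c v by auto
  have IH: "combine u (map2 (\<lambda>a b. a \<otimes> v0 \<oplus> b) c' v'') = combine c' u \<otimes> v0 \<oplus> combine u v''"
    by (rule Cons.hyps) (use Cons.prems c v in auto)
  have cc1: "combine c' u \<in> carrier R" using c' u by (rule combine_in_carrier)
  have cc2: "combine u v'' \<in> carrier R" using u v'' by (rule combine_in_carrier)
  have v0: "v0 \<in> carrier R" by fact
  show ?case unfolding c v using IH x a b cc1 cc2 v0 by simp algebra
qed

lemma combine_in_K: "set a \<subseteq> K \<Longrightarrow> set b \<subseteq> K \<Longrightarrow> combine a b \<in> K"
proof (induct a b rule: combine.induct)
  case (1 k Ks u Us)
  thus ?case using subring_props(6,7)[OF K] by simp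
qed (simp_all add: subring_props(2)[OF K])

lemma vc_indep:
  assumes ind: "independent K (v0 # v')" and c: "set c \<subseteq> K" and len: "length c = length v'"
  shows "independent K (map2 (\<lambda>a b. a \<otimes> v0 \<oplus> b) c v')"
proof -
  let ?w = "map2 (\<lambda>a b. a \<otimes> v0 \<oplus> b) c v'"
  have vc: "set (v0 # v') \<subseteq> carrier R" by (rule independent_in_carrier[OF ind])
  hence v0: "v0 \<in> carrier R" and v': "set v' \<subseteq> carrier R" by auto
  have cc: "set c \<subseteq> carrier R" using c Kc by blast
  have wc: "set ?w \<subseteq> carrier R"
  proof
    fix y assume "y \<in> set ?w"
    then obtain a b where "(a, b) \<in> set (zip c v')" "y = a \<otimes> v0 \<oplus> b" by auto
    hence ab: "a \<in> set c" "b \<in> set v'" and y: "y = a \<otimes> v0 \<oplus> b" by (auto dest: set_zip_leftD set_zip_rightD)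
    have "a \<in> carrier R" "b \<in> carrier R" using ab cc v' by auto
    thus "y \<in> carrier R" unfolding y using v0 by simp
  qed
  have lw: "length ?w = length v'" using len by simp
  show ?thesis
  proof (rule trivial_combine_imp_independent[OF K wc])
    fix Ks assume Ks: "set Ks \<subseteq> K" and z: "combine Ks ?w = \<zero>"
    have Ksc: "set Ks \<subseteq> carrier R" using Ks Kc by blast
    obtain Ks' where K1: "set (take (length ?w) Ks) \<subseteq> set Ks'" and K2: "set Ks' \<subseteq> set (take (length ?w) Ks) \<union> {\<zero>}"
      and K3: "length Ks' = length ?w" and K4: "combine Ks' ?w = \<zero>"
      by (rule combine_normalize[OF Ksc wc z])
    have tK: "set (take (length ?w) Ks) \<subseteq> K" by (rule subset_trans[OF set_take_subset Ks])
    have Ks'K: "set Ks' \<subseteq> K"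
    proof
      fix y assume "y \<in> set Ks'"
      hence "y \<in> set (take (length ?w) Ks) \<or> y = \<zero>" using K2 by blast
      thus "y \<in> K" using tK subring_props(2)[OF K] by blast
    qed
    have Ks'c: "set Ks' \<subseteq> carrier R" by (rule subset_trans[OF Ks'K Kc])
    have l1: "length Ks' = length c" using K3 lw len by (simp only:)
    have "combine Ks' ?w = combine c Ks' \<otimes> v0 \<oplus> combine Ks' v'"
      by (rule combine_map2[OF l1 len Ks'c cc v' v0])
    also have "\<dots> = combine (combine c Ks' # Ks') (v0 # v')" by (simp only: combine.simps)
    finally have cz: "combine (combine c Ks' # Ks') (v0 # v') = \<zero>" unfolding K4 by (rule sym)
    have sK: "set (combine c Ks' # Ks') \<subseteq> K" using combine_in_K[OF c Ks'K] Ks'K by (simp only: set_simps insert_subset) 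
    have "set (take (length (v0 # v')) (combine c Ks' # Ks')) \<subseteq> {\<zero>}"
      by (rule independent_imp_trivial_combine[OF K ind sK cz])
    moreover have "take (length (v0 # v')) (combine c Ks' # Ks') = combine c Ks' # Ks'" using K3 lw by simp
    ultimately have "set Ks' \<subseteq> {\<zero>}" by simp
    thus "set (take (length ?w) Ks) \<subseteq> {\<zero>}" using K1 by blast
  qed
qed

lemma solve_lin:
  assumes x: "x \<in> carrier R" and t: "t \<in> carrier R" and v0: "v0 \<in> carrier R" "v0 \<noteq> \<zero>"
  shows "x \<otimes> v0 \<oplus> t = \<zero> \<longleftrightarrow> x = \<ominus> t \<otimes> inv v0"
proof -
  have U: "v0 \<in> Units R" using v0 field_Units by blast
  have iv: "inv v0 \<in> carrier R" using U by simp
  have r: "v0 \<otimes> inv v0 = \<one>" using U by simp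
  show ?thesis
  proof
    assume a: "x \<otimes> v0 \<oplus> t = \<zero>"
    have "x \<otimes> v0 = (x \<otimes> v0 \<oplus> t) \<oplus> \<ominus> t" using x v0 t by algebra
    also have "\<dots> = \<ominus> t" unfolding a using t by simp
    finally have e: "x \<otimes> v0 = \<ominus> t" .
    have "x = x \<otimes> (v0 \<otimes> inv v0)" using r x by simp
    also have "\<dots> = (x \<otimes> v0) \<otimes> inv v0" using x v0 iv by (simp add: m_assoc)
    finally show "x = \<ominus> t \<otimes> inv v0" unfolding e .
  next
    assume a: "x = \<ominus> t \<otimes> inv v0"
    have "x \<otimes> v0 = \<ominus> t \<otimes> (inv v0 \<otimes> v0)" unfolding a using t iv v0 by (simp add: m_assoc)
    also have "\<dots> = \<ominus> t" using U t by simp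
    finally show "x \<otimes> v0 \<oplus> t = \<zero>" using t by (simp add: l_neg)
  qed
qed


lemma sum_card_swap: "finite A \<Longrightarrow> finite B \<Longrightarrow>
   (\<Sum>a\<in>A. card {b \<in> B. P a b}) = (\<Sum>b\<in>B. card {a \<in> A. P a b})"
proof -
  assume A: "finite A" and B: "finite B"
  have c: "card {x \<in> X. Q x} = (\<Sum>x\<in>X. if Q x then 1 else 0)" if "finite X" for X and Q :: "_ \<Rightarrow> bool"
    using that by (simp add: sum.inter_filter[symmetric])
  show ?thesis unfolding c[OF A] c[OF B] by (rule sum.swap)
qed

end

context rsetup2
begin

lemma main:
  "length v = n \<Longrightarrow> set v \<subseteq> carrier R \<Longrightarrow> independent K v \<Longrightarrow>
   real (card {u \<in> vecs R n. combine u v = \<zero> \<and> rk R K u = k}) = Ah (card K) m n k"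
proof (induct n arbitrary: v k)
  case 0
  hence v: "v = []" by simp
  have "vecs R 0 = {[]}" unfolding vecs_def by auto
  hence "{u \<in> vecs R 0. combine u v = \<zero> \<and> rk R K u = k} = (if k = 0 then {[]} else {})"
    using rk_Nil v by auto
  thus ?case using q_pos by (simp add: Ah_0)
next
  case (Suc n)
  note IH = Suc.hyps
  let ?q = "card K"
  obtain v0 v' where v: "v = v0 # v'" using Suc.prems(1) by (cases v) auto
  have lv': "length v' = n" using Suc.prems(1) v by simp
  have ind: "independent K (v0 # v')" using Suc.prems(3) v by simp
  have v0: "v0 \<in> carrier R" and v'c: "set v' \<subseteq> carrier R" using Suc.prems(2) v by auto
  have ind': "independent K v'" by (rule independent_backwards(2)[OF ind])
  have v0S: "v0 \<notin> Span K v'" by (rule independent_backwards(1)[OF ind])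
  have v0z: "v0 \<noteq> \<zero>" using v0S Span_subgroup_props(2)[OF K v'c] by blast
  define f where "f u' = \<ominus> combine u' v' \<otimes> inv v0" for u'
  have fc: "f u' \<in> carrier R" if "set u' \<subseteq> carrier R" for u'
  proof -
    have "v0 \<in> Units R" using v0 v0z field_Units by blast
    hence "inv v0 \<in> carrier R" by simp
    thus ?thesis unfolding f_def using combine_in_carrier[OF that v'c] by simp
  qed
  have vc: "set u \<subseteq> carrier R" if "u \<in> vecs R n'" for u n' using that unfolding vecs_def by simp
  have lenv: "length u = n'" if "u \<in> vecs R n'" for u n' using that unfolding vecs_def by simp
  have stepA: "real (card {u \<in> vecs R (Suc n). combine u v = \<zero> \<and> rk R K u = k})
      = real (card {u' \<in> vecs R n. rk R K (f u' # u') = k})"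
  proof -
    have "card {u \<in> vecs R (Suc n). combine u v = \<zero> \<and> rk R K u = k}
        = (\<Sum>u'\<in>vecs R n. card {x \<in> carrier R. combine (x # u') v = \<zero> \<and> rk R K (x # u') = k})"
      by (rule card_vecs_Suc)
    also have "\<dots> = (\<Sum>u'\<in>vecs R n. if rk R K (f u' # u') = k then 1 else 0)"
    proof (rule sum.cong[OF refl])
      fix u' assume u': "u' \<in> vecs R n"
      have uc: "set u' \<subseteq> carrier R" by (rule vc[OF u'])
      have ct: "combine u' v' \<in> carrier R" by (rule combine_in_carrier[OF uc v'c])
      have "{x \<in> carrier R. combine (x # u') v = \<zero> \<and> rk R K (x # u') = k}
          = {x \<in> carrier R. x = f u' \<and> rk R K (x # u') = k}"
      proof (rule Collect_cong)
        fix x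
        show "(x \<in> carrier R \<and> combine (x # u') v = \<zero> \<and> rk R K (x # u') = k) =
              (x \<in> carrier R \<and> x = f u' \<and> rk R K (x # u') = k)"
        proof (cases "x \<in> carrier R")
          case True
          have "combine (x # u') v = x \<otimes> v0 \<oplus> combine u' v'" unfolding v by (simp only: combine.simps)
          hence "combine (x # u') v = \<zero> \<longleftrightarrow> x = f u'" unfolding f_def using solve_lin[OF True ct v0 v0z] by simp
          thus ?thesis by simp
        qed simp
      qed
      also have "\<dots> = (if rk R K (f u' # u') = k then {f u'} else {})" using fc[OF uc] by auto
      finally show "card {x \<in> carrier R. combine (x # u') v = \<zero> \<and> rk R K (x # u') = k}
         = (if rk R K (f u' # u') = k then 1 else 0)" by simp
    qed
    also have "\<dots> = card {u' \<in> vecs R n. rk R K (f u' # u') = k}"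
      using fin_vecs by (simp add: sum.inter_filter[symmetric])
    finally show ?thesis by simp
  qed
  define B where "B j = card {u' \<in> vecs R n. f u' \<in> Span K u' \<and> rk R K u' = j}" for j
  have ind_eq: "(if rk R K (f u' # u') = k then 1 else 0 :: real) =
      (if f u' \<in> Span K u' \<and> rk R K u' = k then 1 else 0)
      + (if Suc (rk R K u') = k then 1 else 0)
      - (if f u' \<in> Span K u' \<and> Suc (rk R K u') = k then 1 else 0)" if u': "u' \<in> vecs R n" for u'
  proof (cases "f u' \<in> Span K u'")
    case True
    thus ?thesis using rk_Cons_in[OF fc[OF vc[OF u']] vc[OF u'] True] by simp
  next
    case False
    thus ?thesis using rk_Cons_notin[OF fc[OF vc[OF u']] vc[OF u'] False] by simp
  qed
  have cnt: "real (card {u' \<in> A. P u'}) = (\<Sum>u'\<in>A. if P u' then 1 else 0)" if "finite A" for A P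
    using that by (simp add: sum.inter_filter[symmetric])
  have stepB: "real (card {u' \<in> vecs R n. rk R K (f u' # u') = k}) =
      real (B k) + real (card {u' \<in> vecs R n. Suc (rk R K u') = k})
      - real (card {u' \<in> vecs R n. f u' \<in> Span K u' \<and> Suc (rk R K u') = k})"
    unfolding B_def cnt[OF fin_vecs] sum_subtractf[symmetric] sum.distrib[symmetric]
    by (rule sum.cong[OF refl]) (rule ind_eq)
  have stepC: "real (B j) = real ?q ^ j * Ah ?q m n j" for j
  proof (cases "j \<le> n")
    case False
    have "{u' \<in> vecs R n. f u' \<in> Span K u' \<and> rk R K u' = j} = {}"
    proof (intro equals0I)
      fix u' assume "u' \<in> {u' \<in> vecs R n. f u' \<in> Span K u' \<and> rk R K u' = j}"
      hence u': "u' \<in> vecs R n" and r: "rk R K u' = j" by auto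
      have "rk R K u' \<le> n" using rk_le[OF vc[OF u']] lenv[OF u'] by simp
      thus False using r False by simp
    qed
    hence "B j = 0" unfolding B_def by (simp only: card.empty)
    thus ?thesis using False by (simp add: Ah_gt)
  next
    case True
    let ?V = "{u' \<in> vecs R n. rk R K u' = j}"
    have finV: "finite ?V" using fin_vecs by simp
    have "(\<Sum>c\<in>KL n. card {u' \<in> ?V. combine c u' = f u'}) = (\<Sum>u'\<in>?V. card {c \<in> KL n. combine c u' = f u'})"
      by (rule sum_card_swap[OF fin_KL finV])
    also have "\<dots> = (\<Sum>u'\<in>?V. if f u' \<in> Span K u' then ?q ^ (n - j) else 0)"
    proof (rule sum.cong[OF refl])
      fix u' assume u': "u' \<in> ?V"
      hence u'v: "u' \<in> vecs R n" and r: "rk R K u' = j" by auto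
      have uc: "set u' \<subseteq> carrier R" by (rule vc[OF u'v])
      have lu: "length u' = n" by (rule lenv[OF u'v])
      have eqset: "{c \<in> KL n. combine c u' = f u'} = {c. set c \<subseteq> K \<and> length c = length u' \<and> combine c u' = f u'}"
        using lu by auto
      show "card {c \<in> KL n. combine c u' = f u'} = (if f u' \<in> Span K u' then ?q ^ (n - j) else 0)"
      proof (cases "f u' \<in> Span K u'")
        case True
        show ?thesis unfolding eqset using count_combine[OF uc True] True lu r by simp
      next
        case False
        have "{c \<in> KL n. combine c u' = f u'} = {}"
        proof (intro equals0I)
          fix c assume "c \<in> {c \<in> KL n. combine c u' = f u'}"
          hence "set c \<subseteq> K" "combine c u' = f u'" by auto
          thus False using combine_in_Span[OF uc, of c] False by simp
        qed
        thus ?thesis using False by (simp only: card.empty if_False)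
      qed
    qed
    also have "\<dots> = ?q ^ (n - j) * card {u' \<in> ?V. f u' \<in> Span K u'}"
      using finV by (simp add: sum.inter_filter[symmetric])
    also have "{u' \<in> ?V. f u' \<in> Span K u'} = {u' \<in> vecs R n. f u' \<in> Span K u' \<and> rk R K u' = j}"
      by (rule Collect_cong) blast
    also have "?q ^ (n - j) * card \<dots> = ?q ^ (n - j) * B j" unfolding B_def ..
    finally have e1: "(\<Sum>c\<in>KL n. card {u' \<in> ?V. combine c u' = f u'}) = ?q ^ (n - j) * B j" .
    have "real (\<Sum>c\<in>KL n. card {u' \<in> ?V. combine c u' = f u'}) = (\<Sum>c\<in>KL n. Ah ?q m n j)"
      unfolding of_nat_sum
    proof (rule sum.cong[OF refl])
      fix c assume c: "c \<in> KL n"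
      hence cK: "set c \<subseteq> K" and lc: "length c = n" by auto
      have cc: "set c \<subseteq> carrier R" by (rule subset_trans[OF cK Kc])
      let ?w = "map2 (\<lambda>a b. a \<otimes> v0 \<oplus> b) c v'"
      have lw: "length ?w = n" using lc lv' by simp
      have indw: "independent K ?w" by (rule vc_indep[OF ind cK]) (simp add: lc lv')
      have wc: "set ?w \<subseteq> carrier R" by (rule independent_in_carrier[OF indw])
      have "{u' \<in> ?V. combine c u' = f u'} = {u \<in> vecs R n. combine u ?w = \<zero> \<and> rk R K u = j}"
      proof (rule Collect_cong)
        fix u'
        show "u' \<in> ?V \<and> combine c u' = f u' \<longleftrightarrow>
              u' \<in> vecs R n \<and> combine u' ?w = \<zero> \<and> rk R K u' = j"
        proof (cases "u' \<in> vecs R n")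
          case True
          have uc: "set u' \<subseteq> carrier R" by (rule vc[OF True])
          have lu: "length u' = n" by (rule lenv[OF True])
          have ct: "combine u' v' \<in> carrier R" by (rule combine_in_carrier[OF uc v'c])
          have cu: "combine c u' \<in> carrier R" by (rule combine_in_carrier[OF cc uc])
          have "combine u' ?w = combine c u' \<otimes> v0 \<oplus> combine u' v'"
            by (rule combine_map2) (simp_all only: lu lc lv' uc cc v'c v0)
          hence "combine u' ?w = \<zero> \<longleftrightarrow> combine c u' = f u'"
            unfolding f_def using solve_lin[OF cu ct v0 v0z] by simp
          moreover have "u' \<in> ?V \<longleftrightarrow> rk R K u' = j" using True by simp
          ultimately show ?thesis using True by blast
        qed simp
      qed
      thus "real (card {u' \<in> ?V. combine c u' = f u'}) = Ah ?q m n j"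
        using IH[OF lw wc indw, of j] by simp
    qed
    also have "\<dots> = real ?q ^ n * Ah ?q m n j" using card_KL[of n] by simp
    finally have e2': "real (\<Sum>c\<in>KL n. card {u' \<in> ?V. combine c u' = f u'}) = real ?q ^ n * Ah ?q m n j" .
    have "real (?q ^ (n - j) * B j) = real ?q ^ n * Ah ?q m n j" using e2' unfolding e1 .
    hence e2: "real ?q ^ (n - j) * real (B j) = real ?q ^ n * Ah ?q m n j" by simp
    have "real ?q ^ n = real ?q ^ (n - j) * real ?q ^ j" using True by (simp flip: power_add)
    hence "real ?q ^ (n - j) * real (B j) = real ?q ^ (n - j) * (real ?q ^ j * Ah ?q m n j)"
      using e2 by (simp add: mult.assoc)
    moreover have "real ?q ^ (n - j) \<noteq> 0" using q_pos by simp
    ultimately show ?thesis by (rule mult_left_cancel[THEN iffD1, rotated])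
  qed
  have "real (card {u \<in> vecs R (Suc n). combine u v = \<zero> \<and> rk R K u = k}) =
      real (B k) + real (card {u' \<in> vecs R n. Suc (rk R K u') = k})
      - real (card {u' \<in> vecs R n. f u' \<in> Span K u' \<and> Suc (rk R K u') = k})"
    using stepA stepB by simp
  also have "\<dots> = Ah ?q m (Suc n) k"
  proof (cases k)
    case 0
    have "{u' \<in> vecs R n. Suc (rk R K u') = k} = {}" "{u' \<in> vecs R n. f u' \<in> Span K u' \<and> Suc (rk R K u') = k} = {}"
      using 0 by simp_all
    thus ?thesis using 0 stepC[of 0] q_pos by (simp add: Ah_Suc)
  next
    case (Suc j)
    have "{u' \<in> vecs R n. Suc (rk R K u') = k} = {u' \<in> vecs R n. rk R K u' = j}"
      "{u' \<in> vecs R n. f u' \<in> Span K u' \<and> Suc (rk R K u') = k} = {u' \<in> vecs R n. f u' \<in> Span K u' \<and> rk R K u' = j}"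
      using Suc by simp_all
    thus ?thesis using Suc stepC[of k] stepC[of j] count_rank[of n j] q_pos unfolding B_def
      by (simp add: Ah_Suc)
  qed
  finally show ?case using Suc.prems(1) by simp
qed


lemma finsum_shift:
  assumes "f \<in> {..<Suc n} \<rightarrow> carrier R"
  shows "finsum R f {..<Suc n} = f 0 \<oplus> finsum R (\<lambda>i. f (Suc i)) {..<n}"
proof -
  have e: "{..<Suc n} = insert 0 (Suc ` {..<n})" by (auto simp: image_iff less_Suc_eq_0_disj)
  have f1: "f \<in> Suc ` {..<n} \<rightarrow> carrier R" using assms by auto
  have "finsum R f {..<Suc n} = f 0 \<oplus> finsum R f (Suc ` {..<n})"
    unfolding e by (rule finsum_insert) (use assms f1 in auto)
  also have "finsum R f (Suc ` {..<n}) = finsum R (\<lambda>i. f (Suc i)) {..<n}"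
    by (rule finsum_reindex[OF f1]) simp
  finally show ?thesis .
qed

lemma dotp_combine:
  "length u = length s \<Longrightarrow> set u \<subseteq> carrier R \<Longrightarrow> set s \<subseteq> carrier R \<Longrightarrow> dotp R u s = combine u s"
proof (induct u arbitrary: s)
  case Nil thus ?case by (simp add: dotp_def)
next
  case (Cons x u)
  obtain y s' where s: "s = y # s'" using Cons.prems(1) by (cases s) auto
  have ls: "length u = length s'" using Cons.prems(1) s by simp
  have uc: "set u \<subseteq> carrier R" and sc: "set s' \<subseteq> carrier R" and x: "x \<in> carrier R" and y: "y \<in> carrier R"
    using Cons.prems s by auto
  have P: "(\<lambda>i. (x # u) ! i \<otimes> s ! i) \<in> {..<Suc (length u)} \<rightarrow> carrier R"
  proof
    fix i assume "i \<in> {..<Suc (length u)}"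
    hence i: "i < length (x # u)" "i < length s" using Cons.prems(1) by auto
    have "(x # u) ! i \<in> carrier R" using i(1) Cons.prems(2) nth_mem by blast
    moreover have "s ! i \<in> carrier R" using i(2) Cons.prems(3) nth_mem by blast
    ultimately show "(x # u) ! i \<otimes> s ! i \<in> carrier R" by simp
  qed
  have "dotp R (x # u) s = finsum R (\<lambda>i. (x # u) ! i \<otimes> s ! i) {..<Suc (length u)}"
    unfolding dotp_def by simp
  also have "\<dots> = x \<otimes> y \<oplus> finsum R (\<lambda>i. u ! i \<otimes> s' ! i) {..<length u}"
    using finsum_shift[OF P] s by simp
  also have "finsum R (\<lambda>i. u ! i \<otimes> s' ! i) {..<length u} = combine u s'"
    using Cons.hyps[OF ls uc sc] unfolding dotp_def .
  finally show ?case using s by simp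
qed

lemma combine_scale: "set u \<subseteq> carrier R \<Longrightarrow> set v \<subseteq> carrier R \<Longrightarrow> a \<in> carrier R \<Longrightarrow>
   combine u (map (\<lambda>x. a \<otimes> x) v) = a \<otimes> combine u v"
proof (induct u v rule: combine.induct)
  case (1 k Ks u Us)
  have c: "combine Ks Us \<in> carrier R" using 1 by (intro combine_in_carrier) auto
  have "k \<in> carrier R" "u \<in> carrier R" using 1 by auto
  thus ?case using 1 c by (simp add: r_distr m_lcomm)
qed simp_all

lemma perp_eq: assumes v: "v \<in> vecs R r"
  shows "perp R r (lineSpan R v) = {u \<in> vecs R r. combine u v = \<zero>}"
proof -
  have vc: "set v \<subseteq> carrier R" and lv: "length v = r" using v unfolding vecs_def by auto
  have "dotp R u s = \<zero>" if u: "u \<in> vecs R r" "combine u v = \<zero>" and s: "s \<in> lineSpan R v" for u s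
  proof -
    obtain a where a: "a \<in> carrier R" and s: "s = map (\<lambda>x. a \<otimes> x) v" using s unfolding lineSpan_def by blast
    have uc: "set u \<subseteq> carrier R" and lu: "length u = r" using u unfolding vecs_def by auto
    have sc: "set s \<subseteq> carrier R" using a vc unfolding s by auto
    have "dotp R u s = combine u s" by (rule dotp_combine) (use lu lv s uc sc in auto)
    also have "\<dots> = a \<otimes> combine u v" unfolding s by (rule combine_scale[OF uc vc a])
    finally show ?thesis using u(2) a by simp
  qed
  moreover have "combine u v = \<zero>" if u: "u \<in> vecs R r" "\<forall>s\<in>lineSpan R v. dotp R u s = \<zero>" for u
  proof -
    have uc: "set u \<subseteq> carrier R" and lu: "length u = r" using u unfolding vecs_def by auto
    have "map (\<lambda>x. \<one> \<otimes> x) v = v" using vc by (induct v) auto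
    hence "v \<in> lineSpan R v" unfolding lineSpan_def by force
    hence "dotp R u v = \<zero>" using u by blast
    thus ?thesis using dotp_combine[of u v] lu lv uc vc by simp
  qed
  ultimately show ?thesis unfolding perp_def by blast
qed

end

lemma sum_by_rank:
  fixes g :: "nat \<Rightarrow> real"
  assumes "finite C" "\<And>c. c \<in> C \<Longrightarrow> f c \<le> r"
  shows "(\<Sum>c\<in>C. g (f c)) = (\<Sum>k\<le>r. real (card {c\<in>C. f c = k}) * g k)"
proof -
  have "(\<Sum>c\<in>C. g (f c)) = (\<Sum>k\<le>r. \<Sum>c\<in>{c. c \<in> C \<and> f c = k}. g (f c))"
    by (rule sum.group[symmetric]) (use assms in auto)
  also have "\<dots> = (\<Sum>k\<le>r. real (card {c\<in>C. f c = k}) * g k)"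
    by (rule sum.cong[OF refl]) simp
  finally show ?thesis .
qed

lemma heval_qpow:
  assumes "fst a = 1"
  shows "heval (qpow q a r) M x y = (\<Sum>u\<le>r. snd (qpow q a r) u M * y ^ u * x ^ (r - u))"
proof -
  have "qpow q a r = (r, snd (qpow q a r))" using fst_qpow[of q a r] assms by (metis mult.right_neutral prod.collapse)
  hence "heval (qpow q a r) M x y = heval (r, snd (qpow q a r)) M x y" by simp
  thus ?thesis by simp
qed

theorem lemma7:
  fixes R :: "'a ring" and K :: "'a set" and q m r :: nat and v :: "'a list"
  assumes "field R" and "finite (carrier R)" and "subfield K R"
    and "card K = q" and "card (carrier R) = q ^ m"
    and "1 \<le> r" and "r \<le> m"
    and "v \<in> vecs R r" and "rk R K v = r"
  shows "real (card {c \<in> perp R r (lineSpan R v). rk R K c = r}) = Aseq q m r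
     \<and> (\<forall>x y. rwe R K r (perp R r (lineSpan R v)) x y
          = real q powi (- int m) *
            (heval (qpow q (lin1 q) r) (int m) x y
             + (real q ^ m - 1) * heval (qpow q lin2 r) (int m) x y))"
proof -
  have rs: "rsetup R K" by (rule rsetup.intro[OF assms(1)]) (simp add: rsetup_axioms_def assms(2,3))
  interpret rsetup2 R K m
    by (rule rsetup2.intro[OF rs]) (simp add: rsetup2_axioms_def assms(4,5))
  have q: "card K = q" by (rule assms(4))
  have qpos: "q > 0" using q_pos q by simp
  have vc: "set v \<subseteq> carrier R" and lv: "length v = r" using assms(8) unfolding vecs_def by auto
  have ind: "independent K v" using indep_iff_rk[OF vc] assms(9) lv by simp
  have P: "perp R r (lineSpan R v) = {u \<in> vecs R r. combine u v = \<zero>\<^bsub>R\<^esub>}" by (rule perp_eq[OF assms(8)])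
  let ?C = "perp R r (lineSpan R v)"
  have cnt: "real (card {c \<in> ?C. rk R K c = k}) = Ah q m r k" for k
  proof -
    have "{c \<in> ?C. rk R K c = k} = {u \<in> vecs R r. combine u v = \<zero>\<^bsub>R\<^esub> \<and> rk R K u = k}"
      unfolding P by blast
    thus ?thesis using main[OF lv vc ind, of k] q by simp
  qed
  have finC: "finite ?C" unfolding P using fin_vecs by simp
  have rkC: "rk R K c \<le> r" if "c \<in> ?C" for c
  proof -
    have "c \<in> vecs R r" using that unfolding P by simp
    hence "set c \<subseteq> carrier R" "length c = r" unfolding vecs_def by auto
    thus ?thesis using rk_le by metis
  qed
  have part2: "rwe R K r ?C x y = real q powi (- int m) *
            (heval (qpow q (lin1 q) r) (int m) x y
             + (real q ^ m - 1) * heval (qpow q lin2 r) (int m) x y)" for x y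
  proof -
    have "rwe R K r ?C x y = (\<Sum>c\<in>?C. (\<lambda>k. y ^ k * x ^ (r - k)) (rk R K c))"
      unfolding rwe_def by simp
    also have "\<dots> = (\<Sum>k\<le>r. real (card {c\<in>?C. rk R K c = k}) * (y ^ k * x ^ (r - k)))"
      by (rule sum_by_rank[OF finC rkC])
    also have "\<dots> = (\<Sum>k\<le>r. Ah q m r k * (y ^ k * x ^ (r - k)))"
      using cnt by simp
    also have "\<dots> = (\<Sum>k\<le>r. (Pc q m r k * y ^ k * x ^ (r - k)) / real q ^ m
        + (real q ^ m - 1) * (Sc q m r k * y ^ k * x ^ (r - k)) / real q ^ m)"
      by (rule sum.cong[OF refl]) (use qpos in \<open>simp add: Ah_def field_simps\<close>)
    also have "\<dots> = (\<Sum>k\<le>r. Pc q m r k * y ^ k * x ^ (r - k)) / real q ^ m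
        + (real q ^ m - 1) * (\<Sum>k\<le>r. Sc q m r k * y ^ k * x ^ (r - k)) / real q ^ m"
      by (simp only: sum.distrib sum_divide_distrib[symmetric] sum_distrib_left[symmetric])
    also have "(\<Sum>k\<le>r. Pc q m r k * y ^ k * x ^ (r - k)) = heval (qpow q (lin1 q) r) (int m) x y"
      unfolding Pc_def by (rule heval_qpow[symmetric]) (simp add: lin1_def)
    also have "(\<Sum>k\<le>r. Sc q m r k * y ^ k * x ^ (r - k)) = heval (qpow q lin2 r) (int m) x y"
      unfolding Sc_def by (rule heval_qpow[symmetric]) (simp add: lin2_def)
    finally have e: "rwe R K r ?C x y = heval (qpow q (lin1 q) r) (int m) x y / real q ^ m +
      (real q ^ m - 1) * heval (qpow q lin2 r) (int m) x y / real q ^ m" .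
    have "real q powi (- int m) = 1 / real q ^ m" by (simp add: power_int_minus divide_inverse)
    thus ?thesis unfolding e by (simp add: add_divide_distrib)
  qed
  show ?thesis using cnt[of r] Ah_diag[OF qpos] part2 by simp
qed

end
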